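(* Let $U\subset\mathbb{R}^N$ be an open connected bounded set and let $u:\overline{U}\to\mathbb{R}^N$ be a continuous, locally Lipschitz, open map such that $\mathcal{L}^N(U)=\mathcal{L}^N(u(U))$ and (i) $u(\partial U)\subset\partial(u(U))$; (ii) $u$ is a.e. differentiable and $\nabla u\in O(N)$ a.e. on $U$. Then $u$ is an affine function.
   Context: $O(N)$ denotes the set of orthogonal $N\times N$ matrices. *)

theory Defs
  imports "HOL-Analysis.Analysis"
begin

definition locally_lipschitz_on :: "('a::metric_space) set \<Rightarrow> ('a \<Rightarrow> 'b::metric_space) \<Rightarrow> bool" where
  "locally_lipschitz_on S f \<longleftrightarrow>
     (\<forall>x\<in>S. \<exists>e>0. \<exists>L. L-lipschitz_on (ball x e \<inter> S) f)"

end

theory Submission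
  imports Defs "HOL-Library.Countable"
begin

typedef 'a wo = "UNIV :: 'a set" by auto

instance wo :: (finite) finite
proof
  have "UNIV = Abs_wo ` UNIV" by (metis Rep_wo_inverse surj_def)
  then show "finite (UNIV :: 'a wo set)" by (metis finite finite_imageI)
qed

instantiation wo :: (finite) linorder
begin
definition less_eq_wo :: "'a wo \<Rightarrow> 'a wo \<Rightarrow> bool" where
  "less_eq_wo x y \<longleftrightarrow> to_nat (Rep_wo x) \<le> to_nat (Rep_wo y)"
definition less_wo :: "'a wo \<Rightarrow> 'a wo \<Rightarrow> bool" where
  "less_wo x y \<longleftrightarrow> to_nat (Rep_wo x) < to_nat (Rep_wo y)"
instance
proof
  fix x y z :: "'a wo"
  show "(x < y) = (x \<le> y \<and> \<not> y \<le> x)" by (auto simp: less_eq_wo_def less_wo_def)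
  show "x \<le> x" by (simp add: less_eq_wo_def)
  show "x \<le> y \<Longrightarrow> y \<le> z \<Longrightarrow> x \<le> z" by (auto simp: less_eq_wo_def)
  show "x \<le> y \<Longrightarrow> y \<le> x \<Longrightarrow> x = y"
    by (auto simp: less_eq_wo_def Rep_wo_inject[symmetric])
  show "x \<le> y \<or> y \<le> x" by (auto simp: less_eq_wo_def)
qed
end

instance wo :: (finite) wellorder
proof
  fix P :: "'a wo \<Rightarrow> bool" and a
  assume H: "\<And>x. (\<And>y. y < x \<Longrightarrow> P y) \<Longrightarrow> P x"
  have "\<forall>x. to_nat (Rep_wo x) = n \<longrightarrow> P x" for n
  proof (induction n rule: less_induct)
    case (less n)
    then show ?case using H by (metis less_wo_def)
  qed
  then show "P a" by blast
qed

definition reidx :: "('b \<Rightarrow> 'a) \<Rightarrow> real^'a \<Rightarrow> real^'b" where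
  "reidx f x = (\<chi> i. x $ f i)"

lemma reidx_comp: "reidx g (reidx f x) = reidx (f \<circ> g) x"
  by (simp add: reidx_def vec_eq_iff)

lemma reidx_inv1: "bij f \<Longrightarrow> reidx (inv f) (reidx f x) = x"
  by (simp add: reidx_def vec_eq_iff bij_is_surj surj_f_inv_f)
lemma reidx_inv2: "bij f \<Longrightarrow> reidx f (reidx (inv f) x) = x"
  by (simp add: reidx_def vec_eq_iff bij_is_inj inv_f_f)

lemma linear_reidx: "linear (reidx f)"
  by (rule linearI) (auto simp: reidx_def vec_eq_iff)

lemma inner_reidx: "bij f \<Longrightarrow> inner (reidx f x) (reidx f y) = inner x y"
  unfolding inner_vec_def reidx_def
  using sum.reindex_bij_betw[of f UNIV UNIV "\<lambda>j. inner (x$j) (y$j)"] by simp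

lemma norm_reidx: "bij f \<Longrightarrow> norm (reidx f x) = norm x"
  by (simp add: norm_eq_sqrt_inner inner_reidx)

lemma continuous_reidx: "continuous_on UNIV (reidx f)"
  by (simp add: linear_continuous_on linear_reidx linear_linear)

lemma prod_Basis_cart: "(\<Prod>b\<in>(Basis :: (real^'n) set). g b) = (\<Prod>i\<in>UNIV. g (axis i 1))"
  by (simp add: Basis_vec_def UNION_singleton_eq_range prod.reindex axis_eq_axis inj_on_def)

lemma lborel_reidx:
  fixes f :: "'b::finite \<Rightarrow> 'a::finite"
  assumes "bij f"
  shows "distr lborel borel (reidx f) = (lborel :: (real^'b) measure)"
proof (rule lborel_eqI[symmetric])
  have meas: "reidx f \<in> borel_measurable borel"
    by (rule borel_measurable_continuous_onI) (rule continuous_reidx)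
  fix l u :: "real^'b"
  assume le: "\<And>b. b \<in> Basis \<Longrightarrow> l \<bullet> b \<le> u \<bullet> b"
  have le': "l $ i \<le> u $ i" for i using le[of "axis i 1"]
    by (auto simp: cart_eq_inner_axis Basis_vec_def) 
  have pre: "reidx f -` box l u = box (reidx (inv f) l) (reidx (inv f) u)"
  proof -
    have "reidx f x \<in> box l u \<longleftrightarrow> x \<in> box (reidx (inv f) l) (reidx (inv f) u)" for x
    proof -
      have "reidx f x \<in> box l u \<longleftrightarrow> (\<forall>i. l$i < x$(f i) \<and> x$(f i) < u$i)"
        by (simp add: mem_box_cart reidx_def)
      also have "\<dots> \<longleftrightarrow> (\<forall>j. l$(inv f j) < x$j \<and> x$j < u$(inv f j))"
        by (metis assms bij_inv_eq_iff)
      also have "\<dots> \<longleftrightarrow> x \<in> box (reidx (inv f) l) (reidx (inv f) u)"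
        by (simp add: mem_box_cart reidx_def)
      finally show ?thesis .
    qed
    then show ?thesis by auto
  qed
  have le2: "\<forall>b\<in>Basis. reidx (inv f) l \<bullet> b \<le> reidx (inv f) u \<bullet> b"
    using le' by (auto simp: Basis_vec_def inner_axis reidx_def)
  have "emeasure (distr lborel borel (reidx f)) (box l u) = emeasure lborel (box (reidx (inv f) l) (reidx (inv f) u))"
    using meas by (simp add: emeasure_distr pre)
  also have "\<dots> = (\<Prod>j\<in>UNIV. (u $ (inv f j) - l $ (inv f j)))"
    using le2 by (simp add: emeasure_lborel_box_eq prod_Basis_cart cart_eq_inner_axis[symmetric] reidx_def)
  also have "\<dots> = (\<Prod>i\<in>UNIV. (u $ i - l $ i))"
    using prod.reindex_bij_betw[of "inv f" UNIV UNIV "\<lambda>i. u $ i - l $ i"] assms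
    by (simp add: bij_imp_bij_inv)
  also have "\<dots> = ennreal (\<Prod>b\<in>Basis. (u - l) \<bullet> b)"
    by (simp add: prod_Basis_cart cart_eq_inner_axis[symmetric])
  finally show "emeasure (distr lborel borel (reidx f)) (box l u) = (\<Prod>b\<in>Basis. (u - l) \<bullet> b)" .
qed simp

lemma lebesgue_reidx:
  fixes f :: "'b::finite \<Rightarrow> 'a::finite"
  assumes "bij f"
  shows "reidx f \<in> lebesgue \<rightarrow>\<^sub>M lebesgue"
    and "distr lebesgue lebesgue (reidx f) = (lebesgue :: (real^'b) measure)"
proof -
  have T_borel[measurable]: "reidx f \<in> borel \<rightarrow>\<^sub>M borel"
    by (rule borel_measurable_continuous_onI) (rule continuous_reidx)
  have T_lborel: "reidx f \<in> lborel \<rightarrow>\<^sub>M lborel" by simp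
  have "distr lebesgue lborel (reidx f) = distr lborel lborel (reidx f)"
    by (rule distr_completion) simp
  also have "\<dots> = distr lborel borel (reidx f)"
    by (rule distr_cong) auto
  also have "\<dots> = lborel" by (rule lborel_reidx[OF assms])
  finally have D: "distr lebesgue lborel (reidx f) = (lborel :: (real^'b) measure)" .
  then have eq: "null_sets lborel = null_sets (distr lebesgue lborel (reidx f) :: (real^'b) measure)"
    by simp
  show "reidx f \<in> lebesgue \<rightarrow>\<^sub>M lebesgue"
    by (simp add: completion.measurable_completion2 eq measurable_completion)
  have "(lebesgue :: (real^'b) measure) = completion (distr lebesgue lborel (reidx f))"
    by (simp add: D)
  also have "\<dots> = distr lebesgue lebesgue (reidx f)"
    by (subst completion.completion_distr_eq) (auto simp: eq measurable_completion)
  finally show "distr lebesgue lebesgue (reidx f) = (lebesgue :: (real^'b) measure)" by simp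
qed

lemma lebesgue_reidx_vimage:
  fixes f :: "'b::finite \<Rightarrow> 'a::finite" and A :: "(real^'b) set"
  assumes "bij f" "A \<in> sets lebesgue"
  shows "reidx f -` A \<in> sets lebesgue" "emeasure lebesgue (reidx f -` A) = emeasure lebesgue A"
proof -
  show "reidx f -` A \<in> sets lebesgue"
    using measurable_sets[OF lebesgue_reidx(1)[OF assms(1)] assms(2)] by simp
  have "emeasure lebesgue A = emeasure (distr lebesgue lebesgue (reidx f)) A"
    by (simp add: lebesgue_reidx(2)[OF assms(1)])
  also have "\<dots> = emeasure lebesgue (reidx f -` A)"
    using assms by (simp add: emeasure_distr lebesgue_reidx(1))
  finally show "emeasure lebesgue (reidx f -` A) = emeasure lebesgue A" by simp
qed

lemma MBgen:
  fixes f :: "real^'n::{finite,wellorder} \<Rightarrow> real^'n::_"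
  assumes S: "S \<in> lmeasurable" and N: "negligible N"
    and lip: "\<And>x. x \<in> S \<Longrightarrow> \<exists>T B. open T \<and> x \<in> T \<and> (\<forall>y\<in>S \<inter> T. norm (f y - f x) \<le> B * norm (y - x))"
    and der: "\<And>x. x \<in> S - N \<Longrightarrow> (f has_derivative f' x) (at x)"
    and bd: "\<And>x. x \<in> S - N \<Longrightarrow> \<bar>det (matrix (f' x))\<bar> \<le> B" and B: "0 \<le> B"
  shows "f ` S \<in> lmeasurable \<and> measure lebesgue (f ` S) \<le> B * measure lebesgue S"
proof -
  have S1: "S - N \<in> lmeasurable"
    using S N by (simp add: fmeasurable_Diff negligible_imp_sets)
  have der1: "\<And>x. x \<in> S - N \<Longrightarrow> (f has_derivative f' x) (at x within (S - N))"
    using der has_derivative_at_withinI by blast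
  have meas: "(\<lambda>x. \<bar>det (matrix (f' x))\<bar>) \<in> borel_measurable (lebesgue_on (S - N))"
    using borel_measurable_det_Jacobian[OF fmeasurableD[OF S1] der1] by measurable
  have "(\<lambda>x. \<bar>det (matrix (f' x))\<bar>) absolutely_integrable_on (S - N)"
    by (rule measurable_bounded_by_integrable_imp_absolutely_integrable[OF meas fmeasurableD[OF S1], where g="\<lambda>x. B"])
       (use S1 bd in \<open>auto intro: integrable_on_const\<close>)
  then have int: "(\<lambda>x. \<bar>det (matrix (f' x))\<bar>) integrable_on (S - N)"
    using set_lebesgue_integral_eq_integral(1) by blast
  have m1: "f ` (S - N) \<in> lmeasurable" and le1: "measure lebesgue (f ` (S - N)) \<le> B * measure lebesgue (S - N)"
    using measurable_bounded_differentiable_image[OF S1 der1 int bd]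
      measure_bounded_differentiable_image[OF S1 der1 int bd] by auto
  have neg: "negligible (f ` (S \<inter> N))"
  proof (rule negligible_locally_Lipschitz_image)
    show "negligible (S \<inter> N)" using N negligible_subset by blast
    fix x assume "x \<in> S \<inter> N"
    then obtain T B where "open T" "x \<in> T" "\<forall>y\<in>S \<inter> T. norm (f y - f x) \<le> B * norm (y - x)"
      using lip by blast
    then show "\<exists>T B. open T \<and> x \<in> T \<and> (\<forall>y\<in>S \<inter> N \<inter> T. norm (f y - f x) \<le> B * norm (y - x))"
      by blast
  qed simp
  have eq: "f ` S = f ` (S - N) \<union> f ` (S \<inter> N)" by auto
  have m2: "f ` (S \<inter> N) \<in> lmeasurable" using neg negligible_imp_measurable by blast
  show ?thesis
  proof
    show "f ` S \<in> lmeasurable" using eq m1 m2 by auto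
    have a: "measure lebesgue (f ` S) \<le> measure lebesgue (f ` (S - N)) + measure lebesgue (f ` (S \<inter> N))"
      unfolding eq by (rule measure_Un_le) (use m1 m2 in auto)
    have b: "measure lebesgue (f ` (S \<inter> N)) = 0"
      using neg by (simp add: negligible_iff_null_sets measure_eq_0_null_sets)
    have "measure lebesgue (S - N) \<le> measure lebesgue S"
      using S S1 by (simp add: measure_mono_fmeasurable fmeasurableD)
    then have c: "B * measure lebesgue (S - N) \<le> B * measure lebesgue S"
      using B by (simp add: mult_left_mono)
    show "measure lebesgue (f ` S) \<le> B * measure lebesgue S" using a b c le1 by linarith
  qed
qed

lemma det_row_replace:
  fixes r :: "real^'n::finite"
  shows "det ((\<chi> i j. if i = k then r $ j else (if i = j then 1 else 0)) :: real^'n^'n) = r $ k"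
proof -
  define A0 :: "real^'n^'n" where "A0 = (\<chi> i j. if i = j then (if i = k then r $ k else 1) else 0)"
  define x where "x = (\<Sum>j\<in>UNIV - {k}. r $ j *s axis j (1::real))"
  have rowj: "row j A0 = axis j 1" if "j \<noteq> k" for j
    using that by (auto simp: row_def A0_def axis_def vec_eq_iff)
  have rowk: "row k A0 = r $ k *s axis k 1"
    by (auto simp: row_def A0_def axis_def vec_eq_iff)
  have xs: "x \<in> vec.span {row j A0 |j. j \<noteq> k}"
    unfolding x_def
  proof (rule vec.span_sum)
    fix j assume "j \<in> UNIV - {k}"
    then have "axis j 1 \<in> {row j A0 |j. j \<noteq> k}" using rowj by force
    then show "r $ j *s axis j 1 \<in> vec.span {row j A0 |j. j \<noteq> k}"
      by (simp add: vec.span_base vec.span_scale)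
  qed
  have xv: "x $ m = (if m = k then 0 else r $ m)" for m
    unfolding x_def by (cases "m = k") (simp_all add: sum_component axis_def mult.commute[of "r $ _"] if_distrib[where f="\<lambda>t. t * _"] cong: if_cong)
  have "(\<chi> i j. if i = k then r $ j else (if i = j then 1 else 0)) =
        (\<chi> m. if m = k then row k A0 + x else row m A0)"
    by (auto simp: vec_eq_iff rowk xv row_def A0_def axis_def)
  then have "det ((\<chi> i j. if i = k then r $ j else (if i = j then 1 else 0)) :: real^'n^'n) = det A0"
    using det_row_span[OF xs] by simp
  also have "\<dots> = (\<Prod>i\<in>UNIV. A0 $ i $ i)"
    by (rule det_diagonal) (simp add: A0_def)
  also have "\<dots> = r $ k"
  proof -
    have "(\<Prod>i\<in>UNIV. A0 $ i $ i) = (\<Prod>i\<in>UNIV. if i = k then r $ k else 1)"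
      by (simp add: A0_def)
    also have "\<dots> = r $ k" by (simp add: prod.delta)
    finally show ?thesis .
  qed
  finally show ?thesis .
qed

lemma norm_le_card_bound:
  fixes v :: "real^'n::finite"
  assumes "\<And>i. \<bar>v $ i\<bar> \<le> \<delta>"
  shows "norm v \<le> real CARD('n) * \<delta>"
proof -
  have "norm v \<le> (\<Sum>i\<in>UNIV. \<bar>v $ i\<bar>)" by (rule norm_le_l1_cart)
  also have "\<dots> \<le> (\<Sum>i\<in>(UNIV::'n set). \<delta>)" by (rule sum_mono) (use assms in auto)
  also have "\<dots> = real CARD('n) * \<delta>" by simp
  finally show ?thesis .
qed

lemma measure_cbox_cart:
  fixes a b :: "real^'n::finite"
  assumes "\<And>i. a $ i \<le> b $ i"
  shows "measure lebesgue (cbox a b) = (\<Prod>i\<in>UNIV. b $ i - a $ i)"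
proof -
  have ne: "cbox a b \<noteq> {}" using assms by (auto simp: interval_ne_empty_cart)
  have "measure lebesgue (cbox a b) = Henstock_Kurzweil_Integration.content (cbox a b)"
    by (simp add: measure_completion)
  also have "\<dots> = (\<Prod>i\<in>UNIV. b $ i - a $ i)" using content_cbox_cart[OF ne] .
  finally show ?thesis .
qed

lemma orth_entry_le:
  fixes D :: "real^'n::finite \<Rightarrow> real^'n"
  assumes "linear D" "orthogonal_matrix (matrix D)"
  shows "\<bar>matrix D $ k $ k\<bar> \<le> 1"
proof -
  have ot: "orthogonal_transformation D" using assms by (simp add: orthogonal_transformation_matrix)
  have "matrix D $ k $ k = D (axis k 1) $ k" by (simp add: matrix_def)
  also have "\<bar>\<dots>\<bar> \<le> norm (D (axis k 1))" by (rule component_le_norm_cart)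
  also have "\<dots> = 1" using orthogonal_transformation_norm[OF ot] by simp
  finally show ?thesis .
qed

lemma L2:
  fixes g :: "real^'n::{finite,wellorder} \<Rightarrow> real^'n::_"
  assumes W: "open W" "convex W"
    and cont: "continuous_on W g"
    and lip: "\<And>x. x \<in> W \<Longrightarrow> \<exists>T B. open T \<and> x \<in> T \<and> (\<forall>y\<in>W \<inter> T. norm (g y - g x) \<le> B * norm (y - x))"
    and N: "negligible N"
    and der: "\<And>x. x \<in> W - N \<Longrightarrow> \<exists>D. (g has_derivative D) (at x) \<and> orthogonal_matrix (matrix D)"
    and xy: "x \<in> W" "y = x + d *\<^sub>R axis k 1" "y \<in> W" "0 < d"
  shows "g y $ k - g x $ k \<le> d"
proof -
 have main: "g y $ k - g x $ k \<le> d + 2 * \<epsilon>" if "0 < \<epsilon>" for \<epsilon> :: real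
 proof -
  define h where "h z = g z $ k" for z
  define F where "F z = z + (g z $ k - z $ k) *\<^sub>R axis k (1::real)" for z
  have Fk: "F z $ k = h z" for z by (simp add: F_def h_def)
  have Fi: "i \<noteq> k \<Longrightarrow> F z $ i = z $ i" for z i by (simp add: F_def axis_def)
  have seg: "closed_segment x y \<subseteq> W" using W(2) xy by (simp add: closed_segment_subset)
  obtain e where e: "e > 0" "(\<Union>p\<in>closed_segment x y. ball p e) \<subseteq> W"
    using compact_subset_open_imp_ball_epsilon_subset[OF compact_segment W(1) seg] by blast
  obtain d1 where d1: "d1 > 0" "\<And>z. z \<in> W \<Longrightarrow> dist z x < d1 \<Longrightarrow> dist (g z) (g x) < \<epsilon>"
    using cont xy(1) \<open>0 < \<epsilon>\<close> unfolding continuous_on_iff by metis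
  obtain d2 where d2: "d2 > 0" "\<And>z. z \<in> W \<Longrightarrow> dist z y < d2 \<Longrightarrow> dist (g z) (g y) < \<epsilon>"
    using cont xy(3) \<open>0 < \<epsilon>\<close> unfolding continuous_on_iff by metis
  define \<delta> where "\<delta> = min e (min d1 d2) / (2 * real CARD('n::_))"
  have \<delta>: "\<delta> > 0" using e d1 d2 by (simp add: \<delta>_def)
  have card\<delta>: "real CARD('n::_) * \<delta> < min e (min d1 d2)"
  proof -
    have "real CARD('n::_) * \<delta> = min e (min d1 d2) / 2" by (simp add: \<delta>_def)
    moreover have "min e (min d1 d2) > 0" using e d1 d2 by simp
    ultimately show ?thesis by linarith
  qed
  define a :: "real^'n::_" where "a = (\<chi> i. if i = k then x $ k else x $ i - \<delta>)"
  define b :: "real^'n::_" where "b = (\<chi> i. if i = k then x $ k + d else x $ i + \<delta>)"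
  have ab: "a $ i \<le> b $ i" for i using \<delta> xy(4) by (simp add: a_def b_def)
  have yk: "y $ k = x $ k + d" and yi: "i \<noteq> k \<Longrightarrow> y $ i = x $ i" for i
    using xy(2) by (auto simp: axis_def)
  have nearW: "z \<in> W" if "\<And>i. i \<noteq> k \<Longrightarrow> \<bar>z $ i - x $ i\<bar> \<le> \<delta>" "x $ k \<le> z $ k" "z $ k \<le> x $ k + d" for z
  proof -
    define s where "s = z $ k - x $ k"
    define p where "p = x + s *\<^sub>R axis k (1::real)"
    have "p = (1 - s / d) *\<^sub>R x + (s / d) *\<^sub>R y"
      using xy(2) xy(4) by (simp add: p_def algebra_simps)
    moreover have "0 \<le> s / d" "s / d \<le> 1" using that xy(4) by (auto simp: s_def)
    ultimately have p: "p \<in> closed_segment x y" unfolding closed_segment_def by blast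
    have "norm (z - p) \<le> real CARD('n::_) * \<delta>"
      by (rule norm_le_card_bound) (use that \<delta> in \<open>auto simp: p_def s_def axis_def\<close>)
    then have "dist p z < e" using card\<delta> by (simp add: dist_norm norm_minus_commute)
    then have "z \<in> ball p e" by simp
    then show ?thesis using e(2) p by blast
  qed
  have CW: "cbox a b \<subseteq> W"
  proof
    fix z assume "z \<in> cbox a b"
    then have z: "a $ i \<le> z $ i \<and> z $ i \<le> b $ i" for i by (simp add: mem_box_cart)
    show "z \<in> W"
    proof (rule nearW)
      fix i assume "i \<noteq> k"
      then show "\<bar>z $ i - x $ i\<bar> \<le> \<delta>" using z[of i] by (simp add: a_def b_def abs_le_iff)
    next
      show "x $ k \<le> z $ k" "z $ k \<le> x $ k + d" using z[of k] by (simp_all add: a_def b_def)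
    qed
  qed
  show "g y $ k - g x $ k \<le> d + 2 * \<epsilon>"
  proof (cases "h x + \<epsilon> \<le> h y - \<epsilon>")
    case False
    then show ?thesis using xy(4) \<open>0 < \<epsilon>\<close> by (simp add: h_def)
  next
    case True
    define a' :: "real^'n::_" where "a' = (\<chi> i. if i = k then h x + \<epsilon> else x $ i - \<delta>)"
    define b' :: "real^'n::_" where "b' = (\<chi> i. if i = k then h y - \<epsilon> else x $ i + \<delta>)"
    have ab': "a' $ i \<le> b' $ i" for i using \<delta> True by (simp add: a'_def b'_def)
    have sub: "cbox a' b' \<subseteq> F ` cbox a b"
    proof
      fix p assume p: "p \<in> cbox a' b'"
      have "a' $ k \<le> p $ k \<and> p $ k \<le> b' $ k" using p by (simp add: mem_box_cart)
      then have pk: "h x + \<epsilon> \<le> p $ k" "p $ k \<le> h y - \<epsilon>" by (simp_all add: a'_def b'_def)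
      define w :: "real^'n::_" where "w = (\<chi> i. if i = k then x $ k else p $ i)"
      define \<phi> where "\<phi> s = w + s *\<^sub>R axis k (1::real)" for s
      have \<phi>C: "\<phi> s \<in> cbox a b" if "0 \<le> s" "s \<le> d" for s
      proof -
        have pi: "a' $ i \<le> p $ i \<and> p $ i \<le> b' $ i" for i using p by (simp add: mem_box_cart)
        have "a $ i \<le> \<phi> s $ i \<and> \<phi> s $ i \<le> b $ i" for i
        proof (cases "i = k")
          case True then show ?thesis using that by (simp add: a_def b_def \<phi>_def w_def)
        next
          case False then show ?thesis using pi[of i] by (simp add: a_def b_def a'_def b'_def \<phi>_def w_def axis_def)
        qed
        then show ?thesis by (simp add: mem_box_cart)
      qed
      have nw: "norm (w - x) \<le> real CARD('n::_) * \<delta>"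
      proof (rule norm_le_card_bound)
        fix i
        have "a' $ i \<le> p $ i \<and> p $ i \<le> b' $ i" using p by (simp add: mem_box_cart)
        then show "\<bar>(w - x) $ i\<bar> \<le> \<delta>" using \<delta> by (cases "i = k") (auto simp: w_def a'_def b'_def)
      qed
      have wW: "w \<in> W" using \<phi>C[of 0] \<delta> xy(4) CW by (auto simp: \<phi>_def)
      have "dist (g w) (g x) < \<epsilon>"
        by (rule d1(2)[OF wW]) (use nw card\<delta> in \<open>simp add: dist_norm\<close>)
      moreover have "\<bar>(g w - g x) $ k\<bar> \<le> norm (g w - g x)" by (rule component_le_norm_cart)
      ultimately have "h w < h x + \<epsilon>" unfolding h_def dist_norm by simp
      then have lo: "h (\<phi> 0) \<le> p $ k" using pk by (simp add: \<phi>_def)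
      have e2: "\<phi> d - y = w - x" using xy(2) by (simp add: \<phi>_def)
      have wdW: "\<phi> d \<in> W" using \<phi>C[of d] xy(4) CW by auto
      have "dist (g (\<phi> d)) (g y) < \<epsilon>"
        by (rule d2(2)[OF wdW]) (use nw card\<delta> e2 in \<open>simp add: dist_norm\<close>)
      moreover have "\<bar>(g (\<phi> d) - g y) $ k\<bar> \<le> norm (g (\<phi> d) - g y)" by (rule component_le_norm_cart)
      ultimately have "h (\<phi> d) > h y - \<epsilon>" unfolding h_def dist_norm by simp
      then have hi: "p $ k \<le> h (\<phi> d)" using pk by simp
      have ch: "continuous_on {0..d} (h \<circ> \<phi>)"
      proof -
        have "continuous_on {0..d} \<phi>" unfolding \<phi>_def by (intro continuous_intros)
        moreover have "\<phi> ` {0..d} \<subseteq> W" using \<phi>C CW by auto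
        moreover have "continuous_on W h" unfolding h_def
          by (intro continuous_intros cont)
        ultimately show ?thesis by (metis continuous_on_compose continuous_on_subset)
      qed
      obtain s where s: "0 \<le> s" "s \<le> d" "(h \<circ> \<phi>) s = p $ k"
        using IVT'[of "h \<circ> \<phi>" 0 "p $ k" d, OF _ _ _ ch] lo hi xy(4) by auto
      have "F (\<phi> s) = p"
      proof (subst vec_eq_iff, intro allI)
        fix i show "F (\<phi> s) $ i = p $ i"
          using s by (cases "i = k") (auto simp: Fk Fi \<phi>_def w_def axis_def)
      qed
      then show "p \<in> F ` cbox a b" using \<phi>C[OF s(1,2)] by force
    qed
    have mb: "F ` cbox a b \<in> lmeasurable \<and> measure lebesgue (F ` cbox a b) \<le> 1 * measure lebesgue (cbox a b)"
    proof (rule MBgen[where N = N and f' = "\<lambda>z v. v + ((SOME D. (g has_derivative D) (at z) \<and> orthogonal_matrix (matrix D)) v $ k - v $ k) *\<^sub>R axis k 1"])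
      show "cbox a b \<in> lmeasurable" by simp
      show "negligible N" by (rule N)
      fix z assume zC: "z \<in> cbox a b"
      then have zW: "z \<in> W" using CW by auto
      obtain T B where TB: "open T" "z \<in> T" "\<forall>y\<in>W \<inter> T. norm (g y - g z) \<le> B * norm (y - z)"
        using lip[OF zW] by blast
      have "norm (F y - F z) \<le> (2 + B) * norm (y - z)" if "y \<in> cbox a b \<inter> T" for y
      proof -
        have gy: "norm (g y - g z) \<le> B * norm (y - z)" using TB(3) that CW by auto
        have "F y - F z = (y - z) + ((g y - g z) $ k - (y - z) $ k) *\<^sub>R axis k 1"
          by (simp add: F_def algebra_simps)
        then have "norm (F y - F z) \<le> norm (y - z) + \<bar>(g y - g z) $ k - (y - z) $ k\<bar>"
          by (metis norm_triangle_ineq norm_axis_1 norm_scaleR mult.right_neutral)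
        also have "\<dots> \<le> norm (y - z) + (norm (g y - g z) + norm (y - z))"
          using component_le_norm_cart[of "g y - g z" k] component_le_norm_cart[of "y - z" k] by simp
        finally show ?thesis using gy by (simp add: algebra_simps)
      qed
      then show "\<exists>T B. open T \<and> z \<in> T \<and> (\<forall>y\<in>cbox a b \<inter> T. norm (F y - F z) \<le> B * norm (y - z))"
        using TB(1,2) by blast
    next
      fix z assume z: "z \<in> cbox a b - N"
      then have zW: "z \<in> W - N" using CW by auto
      define D where "D = (SOME D. (g has_derivative D) (at z) \<and> orthogonal_matrix (matrix D))"
      have D: "(g has_derivative D) (at z)" "orthogonal_matrix (matrix D)"
        using someI_ex[OF der[OF zW]] unfolding D_def by auto
      have lD: "linear D" using D(1) has_derivative_linear by blast
      have "(F has_derivative (\<lambda>v. v + (D v $ k - v $ k) *\<^sub>R axis k 1)) (at z)"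
      proof -
        have d1: "((\<lambda>z. g z $ k) has_derivative (\<lambda>v. D v $ k)) (at z)"
          using bounded_linear.has_derivative[OF bounded_linear_vec_nth D(1)] .
        have d2: "((\<lambda>z. z $ k) has_derivative (\<lambda>v. v $ k)) (at z)"
          by (rule bounded_linear_imp_has_derivative) (rule bounded_linear_vec_nth)
        show ?thesis unfolding F_def by (intro derivative_intros d1 d2)
      qed
      then show "(F has_derivative (\<lambda>v. v + ((SOME D. (g has_derivative D) (at z) \<and> orthogonal_matrix (matrix D)) v $ k - v $ k) *\<^sub>R axis k 1)) (at z)"
        by (simp add: D_def)
      have mat: "matrix (\<lambda>v. v + (D v $ k - v $ k) *\<^sub>R axis k 1) =
          (\<chi> i j. if i = k then (row k (matrix D)) $ j else (if i = j then 1 else 0))"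
        by (auto simp: vec_eq_iff matrix_def row_def axis_def)
      have "\<bar>det (matrix (\<lambda>v. v + (D v $ k - v $ k) *\<^sub>R axis k 1))\<bar> \<le> 1"
        unfolding mat det_row_replace using orth_entry_le[OF lD D(2)] by (simp add: row_def)
      then show "\<bar>det (matrix (\<lambda>v. v + ((SOME D. (g has_derivative D) (at z) \<and> orthogonal_matrix (matrix D)) v $ k - v $ k) *\<^sub>R axis k 1))\<bar> \<le> 1"
        by (simp add: D_def)
    qed simp
    have "measure lebesgue (cbox a' b') \<le> measure lebesgue (F ` cbox a b)"
      by (rule measure_mono_fmeasurable[OF sub]) (use mb in auto)
    then have ineq: "measure lebesgue (cbox a' b') \<le> measure lebesgue (cbox a b)" using mb by simp
    define P where "P = (\<Prod>i\<in>UNIV - {k}. 2 * \<delta>)"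
    have P: "P > 0" using \<delta> by (simp add: P_def)
    have m1: "measure lebesgue (cbox a b) = d * P"
    proof -
      have "measure lebesgue (cbox a b) = (\<Prod>i\<in>UNIV. b $ i - a $ i)" by (rule measure_cbox_cart[OF ab])
      also have "\<dots> = (b $ k - a $ k) * (\<Prod>i\<in>UNIV - {k}. b $ i - a $ i)" by (simp add: prod.remove)
      also have "(\<Prod>i\<in>UNIV - {k}. b $ i - a $ i) = P" unfolding P_def
        by (rule prod.cong) (auto simp: a_def b_def)
      finally show ?thesis by (simp add: a_def b_def)
    qed
    have m2: "measure lebesgue (cbox a' b') = (h y - \<epsilon> - (h x + \<epsilon>)) * P"
    proof -
      have "measure lebesgue (cbox a' b') = (\<Prod>i\<in>UNIV. b' $ i - a' $ i)" by (rule measure_cbox_cart[OF ab'])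
      also have "\<dots> = (b' $ k - a' $ k) * (\<Prod>i\<in>UNIV - {k}. b' $ i - a' $ i)" by (simp add: prod.remove)
      also have "(\<Prod>i\<in>UNIV - {k}. b' $ i - a' $ i) = P" unfolding P_def
        by (rule prod.cong) (auto simp: a'_def b'_def)
      finally show ?thesis by (simp add: a'_def b'_def)
    qed
    have "h y - \<epsilon> - (h x + \<epsilon>) \<le> d" using ineq m1 m2 P by (simp add: mult_le_cancel_right)
    then show ?thesis using \<open>0 < \<epsilon>\<close> by (simp add: h_def)
  qed
 qed
 show ?thesis
 proof (rule field_le_epsilon)
   fix e :: real assume "0 < e" then show "g y $ k - g x $ k \<le> d + e" using main[of "e/2"] by simp
 qed
qed

lemma orth_inv_simps:
  fixes Q :: "real^'n::finite \<Rightarrow> real^'n"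
  assumes "orthogonal_transformation Q"
  shows "Q (inv Q z) = z" "inv Q (Q z) = z"
  using orthogonal_transformation_bij[OF assms]
  by (simp_all add: bij_is_surj bij_is_inj surj_f_inv_f inv_f_f)

lemma L1:
  fixes g :: "real^'n::{finite,wellorder} \<Rightarrow> real^'n::_"
  assumes W: "open W" "convex W"
    and cont: "continuous_on W g"
    and lip: "\<And>x. x \<in> W \<Longrightarrow> \<exists>T B. open T \<and> x \<in> T \<and> (\<forall>y\<in>W \<inter> T. norm (g y - g x) \<le> B * norm (y - x))"
    and N: "negligible N"
    and der: "\<And>x. x \<in> W - N \<Longrightarrow> \<exists>D. (g has_derivative D) (at x) \<and> orthogonal_matrix (matrix D)"
    and xy: "x \<in> W" "y \<in> W"
  shows "norm (g y - g x) \<le> norm (y - x)"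
proof (cases "y = x \<or> g y = g x")
  case True then show ?thesis by auto
next
  case False
  then have xy': "y \<noteq> x" "g y \<noteq> g x" by auto
  define d where "d = norm (y - x)"
  have d: "d > 0" using xy' by (simp add: d_def)
  obtain k :: "'n::{finite,wellorder}" where True by blast
  define v where "v = (1 / d) *\<^sub>R (y - x)"
  have nv: "norm v = norm (axis k (1::real))" using d by (simp add: v_def d_def)
  obtain Q :: "real^'n::_ \<Rightarrow> real^'n::_" where Q: "orthogonal_transformation Q" "Q (axis k 1) = v"
    using orthogonal_transformation_exists[OF nv[symmetric]] by blast
  define c where "c = norm (g y - g x)"
  have c: "c > 0" using xy' by (simp add: c_def)
  define e where "e = (1 / c) *\<^sub>R (g y - g x)"
  have ne: "norm e = norm (axis k (1::real))" using c by (simp add: e_def c_def)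
  obtain P :: "real^'n::_ \<Rightarrow> real^'n::_" where P: "orthogonal_transformation P" "P e = axis k 1"
    using orthogonal_transformation_exists[OF ne] by blast
  define Qi where "Qi = inv Q"
  have Qi: "orthogonal_transformation Qi" using Q(1) by (simp add: Qi_def orthogonal_transformation_inv)
  have QQi: "Q (Qi z) = z" "Qi (Q z) = z" for z using orth_inv_simps[OF Q(1)] by (simp_all add: Qi_def)
  have lQ: "linear Q" "linear Qi" "linear P"
    using Q(1) Qi P(1) orthogonal_transformation_linear by blast+
  have nQ: "norm (Q z) = norm z" "norm (Qi z) = norm z" "norm (P z) = norm z" for z
    using Q(1) Qi P(1) orthogonal_transformation_norm by blast+
  define g' where "g' = P \<circ> g \<circ> Q"
  define W' where "W' = Q -` W"
  define N' where "N' = Q -` N"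
  have N'eq: "N' = Qi ` N"
  proof
    show "N' \<subseteq> Qi ` N"
    proof
      fix z assume "z \<in> N'"
      then have "Q z \<in> N" by (simp add: N'_def)
      moreover have "z = Qi (Q z)" by (simp add: QQi)
      ultimately show "z \<in> Qi ` N" by blast
    qed
    show "Qi ` N \<subseteq> N'" by (auto simp: N'_def QQi)
  qed
  have cQ: "continuous_on UNIV Q" by (simp add: lQ(1) linear_continuous_on linear_linear)
  have cP: "continuous_on UNIV P" by (simp add: lQ(3) linear_continuous_on linear_linear)
  have W'o: "open W'" unfolding W'_def using open_vimage[OF W(1) cQ] by simp
  have W'c: "convex W'" unfolding W'_def by (rule convex_linear_vimage[OF lQ(1) W(2)])
  have cont': "continuous_on W' g'"
  proof -
    have "continuous_on W' Q" using cQ continuous_on_subset by blast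
    moreover have "Q ` W' \<subseteq> W" by (auto simp: W'_def)
    ultimately have c1: "continuous_on W' (g \<circ> Q)"
      using continuous_on_compose[of W' Q g] continuous_on_subset[OF cont] by blast
    have "continuous_on ((g \<circ> Q) ` W') P" using cP continuous_on_subset by blast
    then have "continuous_on W' (P \<circ> (g \<circ> Q))" using continuous_on_compose[OF c1] by blast
    then show ?thesis unfolding g'_def by (simp add: comp_assoc)
  qed
  have N'n: "negligible N'"
    unfolding N'eq
  proof (rule negligible_locally_Lipschitz_image)
    fix z assume "z \<in> N"
    show "\<exists>T B. open T \<and> z \<in> T \<and> (\<forall>y\<in>N \<inter> T. norm (Qi y - Qi z) \<le> B * norm (y - z))"
      by (rule exI[of _ UNIV], rule exI[of _ 1]) (simp add: linear_diff[OF lQ(2), symmetric] nQ)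
  qed (use N in auto)
  have lip': "\<exists>T B. open T \<and> z \<in> T \<and> (\<forall>y\<in>W' \<inter> T. norm (g' y - g' z) \<le> B * norm (y - z))"
    if z: "z \<in> W'" for z
  proof -
    obtain T B where TB: "open T" "Q z \<in> T" "\<forall>y\<in>W \<inter> T. norm (g y - g (Q z)) \<le> B * norm (y - Q z)"
      using lip[of "Q z"] z by (auto simp: W'_def)
    have "norm (g' y - g' z) \<le> B * norm (y - z)" if "y \<in> W' \<inter> Q -` T" for y
    proof -
      have "norm (g' y - g' z) = norm (g (Q y) - g (Q z))"
        by (simp add: g'_def linear_diff[OF lQ(3), symmetric] nQ)
      also have "\<dots> \<le> B * norm (Q y - Q z)" using TB(3) that by (auto simp: W'_def)
      also have "norm (Q y - Q z) = norm (y - z)" by (simp add: linear_diff[OF lQ(1), symmetric] nQ)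
      finally show ?thesis .
    qed
    moreover have "open (Q -` T)" using open_vimage[OF TB(1) cQ] by simp
    ultimately show ?thesis using TB(2) by blast
  qed
  have der': "\<exists>D. (g' has_derivative D) (at z) \<and> orthogonal_matrix (matrix D)" if z: "z \<in> W' - N'" for z
  proof -
    have "Q z \<in> W - N" using z by (auto simp: W'_def N'_def)
    then obtain D where D: "(g has_derivative D) (at (Q z))" "orthogonal_matrix (matrix D)"
      using der by blast
    have lD: "linear D" using D(1) has_derivative_linear by blast
    have "((g \<circ> Q) has_derivative (D \<circ> Q)) (at z)"
      by (rule diff_chain_at[OF linear_imp_has_derivative[OF lQ(1)] D(1)])
    then have "((P \<circ> (g \<circ> Q)) has_derivative (P \<circ> (D \<circ> Q))) (at z)"
      by (rule diff_chain_at[OF _ linear_imp_has_derivative[OF lQ(3)]])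
    moreover have "orthogonal_transformation (P \<circ> (D \<circ> Q))"
    proof -
      have oD: "orthogonal_transformation D" using D(2) lD by (simp add: orthogonal_transformation_matrix)
      show ?thesis by (intro orthogonal_transformation_compose oD Q(1) P(1))
    qed
    ultimately show ?thesis unfolding g'_def
      by (metis comp_assoc orthogonal_transformation_matrix)
  qed
  define x' where "x' = Qi x"
  define y' where "y' = Qi y"
  have x'W: "x' \<in> W'" "y' \<in> W'" using xy by (simp_all add: x'_def y'_def W'_def QQi)
  have "y' - x' = Qi (y - x)" by (simp add: x'_def y'_def linear_diff[OF lQ(2)])
  also have "y - x = d *\<^sub>R v" using d by (simp add: v_def)
  also have "Qi (d *\<^sub>R v) = d *\<^sub>R axis k 1"
    by (simp add: linear_scale[OF lQ(2)] Q(2)[symmetric] QQi)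
  finally have y'eq: "y' = x' + d *\<^sub>R axis k 1" by (simp add: algebra_simps)
  have L: "g' y' $ k - g' x' $ k \<le> d"
    by (rule L2[OF W'o W'c cont' lip' N'n der' x'W(1) y'eq x'W(2) d])
  have "g' y' - g' x' = P (g y - g x)"
    by (simp add: g'_def x'_def y'_def QQi linear_diff[OF lQ(3)])
  also have "g y - g x = c *\<^sub>R e" using c by (simp add: e_def)
  also have "P (c *\<^sub>R e) = c *\<^sub>R axis k 1" by (simp add: linear_scale[OF lQ(3)] P(2))
  finally have "(g' y' - g' x') $ k = c" by (simp add: axis_def)
  then have "g' y' $ k - g' x' $ k = c" by simp
  then show ?thesis using L by (simp add: c_def d_def)
qed

lemma open_sets_lebesgue: "open S \<Longrightarrow> (S :: 'a::euclidean_space set) \<in> sets lebesgue"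
  by (metis borel_open sets_completionI_sets sets_lborel)

locale rig =
  fixes U :: "(real^'n::{finite,wellorder}) set" and u :: "real^'n::_ \<Rightarrow> real^'n::_" and N :: "(real^'n::_) set"
  assumes oU: "open U" and cU: "connected U" and bU: "bounded U"
    and cont: "continuous_on (closure U) u"
    and ll: "locally_lipschitz_on (closure U) u"
    and om: "\<forall>V. open V \<and> V \<subseteq> U \<longrightarrow> open (u ` V)"
    and meq: "emeasure lebesgue U = emeasure lebesgue (u ` U)"
    and negN: "negligible N"
    and der: "\<And>x. x \<in> U - N \<Longrightarrow> \<exists>D. (u has_derivative D) (at x) \<and> orthogonal_matrix (matrix D)"
begin

lemma lipS:
  assumes "S \<subseteq> closure U" "x \<in> S"
  shows "\<exists>T B. open T \<and> x \<in> T \<and> (\<forall>y\<in>S \<inter> T. norm (u y - u x) \<le> B * norm (y - x))"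
proof -
  have "x \<in> closure U" using assms by auto
  then obtain e L where e: "e > 0" "L-lipschitz_on (ball x e \<inter> closure U) u"
    using ll unfolding locally_lipschitz_on_def by blast
  have "norm (u y - u x) \<le> L * norm (y - x)" if "y \<in> S \<inter> ball x e" for y
  proof -
    have "dist (u y) (u x) \<le> L * dist y x"
      by (rule lipschitz_onD[OF e(2)]) (use that assms e in auto)
    then show ?thesis by (simp add: dist_norm)
  qed
  then show ?thesis using e(1) by (intro exI[of _ "ball x e"] exI[of _ L]) auto
qed

lemma MBu:
  assumes "S \<subseteq> U" "S \<in> sets lebesgue"
  shows "u ` S \<in> lmeasurable" "measure lebesgue (u ` S) \<le> measure lebesgue S"
proof -
  have S: "S \<in> lmeasurable" using assms bU bounded_subset bounded_set_imp_lmeasurable by blast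
  have "u ` S \<in> lmeasurable \<and> measure lebesgue (u ` S) \<le> 1 * measure lebesgue S"
  proof (rule MBgen[where N = N and f' = "\<lambda>x. SOME D. (u has_derivative D) (at x) \<and> orthogonal_matrix (matrix D)"])
    show "S \<in> lmeasurable" by (rule S)
    show "negligible N" by (rule negN)
    fix x assume "x \<in> S"
    then show "\<exists>T B. open T \<and> x \<in> T \<and> (\<forall>y\<in>S \<inter> T. norm (u y - u x) \<le> B * norm (y - x))"
      using lipS[of S x] assms closure_subset by blast
  next
    fix x assume "x \<in> S - N"
    then have "x \<in> U - N" using assms by auto
    then have D: "(u has_derivative (SOME D. (u has_derivative D) (at x) \<and> orthogonal_matrix (matrix D))) (at x) \<and>
        orthogonal_matrix (matrix (SOME D. (u has_derivative D) (at x) \<and> orthogonal_matrix (matrix D)))"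
      using someI_ex[OF der] by blast
    then show "(u has_derivative (SOME D. (u has_derivative D) (at x) \<and> orthogonal_matrix (matrix D))) (at x)" by blast
    show "\<bar>det (matrix (SOME D. (u has_derivative D) (at x) \<and> orthogonal_matrix (matrix D)))\<bar> \<le> 1"
      using D det_orthogonal_matrix by fastforce
  qed simp
  then show "u ` S \<in> lmeasurable" "measure lebesgue (u ` S) \<le> measure lebesgue S" by auto
qed

lemma U_lmeas: "U \<in> lmeasurable"
  using bU oU open_sets_lebesgue bounded_set_imp_lmeasurable by blast

lemma mU: "measure lebesgue (u ` U) = measure lebesgue U"
  using meq by (simp add: measure_def)

lemma inj: "inj_on u U"
proof (rule inj_onI, rule ccontr)
  fix x1 x2 assume x: "x1 \<in> U" "x2 \<in> U" "u x1 = u x2" "x1 \<noteq> x2"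
  obtain e1 where e1: "e1 > 0" "ball x1 e1 \<subseteq> U" using oU x(1) open_contains_ball by blast
  obtain e2 where e2: "e2 > 0" "ball x2 e2 \<subseteq> U" using oU x(2) open_contains_ball by blast
  define r where "r = min (min e1 e2) (dist x1 x2 / 2)"
  have r: "r > 0" using e1 e2 x(4) by (simp add: r_def)
  define B1 where "B1 = ball x1 r"
  define B2 where "B2 = ball x2 r"
  have B1U: "B1 \<subseteq> U" using e1 by (auto simp: B1_def r_def)
  have B2U: "B2 \<subseteq> U" using e2 by (auto simp: B2_def r_def)
  have disj: "B1 \<inter> B2 = {}"
  proof (rule ccontr)
    assume "B1 \<inter> B2 \<noteq> {}"
    then obtain z where "dist x1 z < r" "dist x2 z < r" by (auto simp: B1_def B2_def)
    then have "dist x1 x2 < 2 * r" by (metis dist_commute dist_triangle_lt add_strict_mono mult_2)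
    then show False by (simp add: r_def)
  qed
  define Ov where "Ov = u ` B1 \<inter> u ` B2"
  have oO: "open Ov" unfolding Ov_def using om B1U B2U by (auto simp: B1_def B2_def)
  have neO: "Ov \<noteq> {}" using x(3) r unfolding Ov_def B1_def B2_def by (metis IntI centre_in_ball empty_iff imageI)
  have mB1: "u ` B1 \<in> lmeasurable" "measure lebesgue (u ` B1) \<le> measure lebesgue B1"
    using MBu[OF B1U] by (auto simp: B1_def)
  have mUB1: "u ` (U - B1) \<in> lmeasurable" "measure lebesgue (u ` (U - B1)) \<le> measure lebesgue (U - B1)"
    using MBu[of "U - B1"] oU by (auto simp: B1_def open_sets_lebesgue)
  have OB1: "Ov \<subseteq> u ` B1" by (auto simp: Ov_def)
  have Om: "Ov \<in> lmeasurable" using oO mB1(1) OB1 open_sets_lebesgue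
    by (meson fmeasurableD2 fmeasurableI2 sets.Int)
  have Opos: "measure lebesgue Ov > 0"
    using open_not_negligible[OF oO neO] negligible_iff_measure0[OF Om] measure_nonneg[of lebesgue Ov] by linarith
  have sub: "u ` U \<subseteq> u ` (U - B1) \<union> (u ` B1 - Ov)"
  proof
    fix y assume "y \<in> u ` U"
    then obtain z where z: "z \<in> U" "y = u z" by blast
    show "y \<in> u ` (U - B1) \<union> (u ` B1 - Ov)"
    proof (cases "z \<in> B1")
      case True
      show ?thesis
      proof (cases "y \<in> Ov")
        case True
        then have "y \<in> u ` B2" by (simp add: Ov_def)
        moreover have "B2 \<subseteq> U - B1" using B2U disj by auto
        ultimately show ?thesis by blast
      next
        case False then show ?thesis using True z by auto
      qed
    next
      case False then show ?thesis using z by auto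
    qed
  qed
  have m2: "u ` B1 - Ov \<in> lmeasurable" using mB1(1) Om by (simp add: fmeasurable_Diff fmeasurableD)
  have "measure lebesgue (u ` U) \<le> measure lebesgue (u ` (U - B1) \<union> (u ` B1 - Ov))"
    by (rule measure_mono_fmeasurable[OF sub]) (use mUB1(1) m2 MBu(1)[OF subset_refl open_sets_lebesgue[OF oU]] in auto)
  also have "\<dots> \<le> measure lebesgue (u ` (U - B1)) + measure lebesgue (u ` B1 - Ov)"
    by (rule measure_Un_le) (use mUB1(1) m2 in auto)
  also have "measure lebesgue (u ` B1 - Ov) = measure lebesgue (u ` B1) - measure lebesgue Ov"
    by (rule measurable_measure_Diff[OF mB1(1) fmeasurableD[OF Om] OB1])
  finally have A: "measure lebesgue (u ` U) \<le> measure lebesgue (U - B1) + measure lebesgue B1 - measure lebesgue Ov"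
    using mUB1(2) mB1(2) by linarith
  have "measure lebesgue (U - B1) = measure lebesgue U - measure lebesgue B1"
    by (rule measurable_measure_Diff[OF U_lmeas]) (use B1U in \<open>auto simp: B1_def open_sets_lebesgue\<close>)
  then show False using A Opos mU by linarith
qed


lemma BALLm:
  assumes "open A" "A \<subseteq> U"
  shows "measure lebesgue (u ` A) = measure lebesgue A"
proof -
  have A: "A \<in> sets lebesgue" using assms(1) open_sets_lebesgue by blast
  have UA: "U - A \<in> sets lebesgue" using assms(1) oU open_sets_lebesgue by blast
  have m1: "u ` A \<in> lmeasurable" "measure lebesgue (u ` A) \<le> measure lebesgue A"
    using MBu[OF assms(2) A] by auto
  have m2: "u ` (U - A) \<in> lmeasurable" "measure lebesgue (u ` (U - A)) \<le> measure lebesgue (U - A)"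
    using MBu[OF _ UA] by auto
  have eq: "u ` U = u ` A \<union> u ` (U - A)" using assms(2) by auto
  have dis: "u ` A \<inter> u ` (U - A) = {}"
    using inj assms(2) by (auto simp: inj_on_def)
  have "measure lebesgue (u ` U) = measure lebesgue (u ` A) + measure lebesgue (u ` (U - A))"
    unfolding eq using measure_Un3[OF m1(1) m2(1)] dis by simp
  moreover have "measure lebesgue (U - A) = measure lebesgue U - measure lebesgue A"
    by (rule measurable_measure_Diff[OF U_lmeas A assms(2)])
  ultimately have "measure lebesgue A \<le> measure lebesgue (u ` A)" using mU m2(2) by linarith
  then show ?thesis using m1(2) by linarith
qed

lemma LIP1:
  assumes "ball c R \<subseteq> U" "x \<in> ball c R" "y \<in> ball c R"
  shows "norm (u y - u x) \<le> norm (y - x)"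
proof (rule L1[where W = "ball c R" and N = N])
  have bc: "ball c R \<subseteq> closure U" using assms(1) closure_subset by blast
  show "continuous_on (ball c R) u" using cont bc continuous_on_subset by blast
  fix z assume "z \<in> ball c R"
  then show "\<exists>T B. open T \<and> z \<in> T \<and> (\<forall>y\<in>ball c R \<inter> T. norm (u y - u z) \<le> B * norm (y - z))"
    using lipS[OF bc] by blast
next
  fix z assume "z \<in> ball c R - N"
  then show "\<exists>D. (u has_derivative D) (at z) \<and> orthogonal_matrix (matrix D)"
    using der assms(1) by blast
qed (use assms negN in auto)

lemma measure_ball_eq: "measure lebesgue (ball (a::real^'n::_) r) = measure lebesgue (ball (b::real^'n::_) r)"
proof (cases "r \<ge> 0")
  case True
  then show ?thesis by (simp add: measure_completion content_ball)
next
  case False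
  then show ?thesis by (simp add: ball_empty)
qed

lemma DENS:
  assumes "ball c R \<subseteq> U" "ball z t \<subseteq> ball c R" "t > 0"
    and "open Ov" "Ov \<noteq> {}" "Ov \<subseteq> ball (u z) t"
  shows "Ov \<inter> u ` ball z t \<noteq> {}"
proof
  assume dis: "Ov \<inter> u ` ball z t = {}"
  have zc: "z \<in> ball c R" using assms(2,3) centre_in_ball by blast
  have sub: "u ` ball z t \<subseteq> ball (u z) t - Ov"
  proof
    fix v assume "v \<in> u ` ball z t"
    then obtain w where w: "w \<in> ball z t" "v = u w" by blast
    have "norm (u w - u z) \<le> norm (w - z)"
      using LIP1[OF assms(1) zc] w(1) assms(2) by blast
    also have "\<dots> < t" using w(1) by (simp add: dist_norm norm_minus_commute)
    finally have "v \<in> ball (u z) t" using w by (simp add: dist_norm norm_minus_commute)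
    then show "v \<in> ball (u z) t - Ov" using dis \<open>v \<in> u ` ball z t\<close> by blast
  qed
  have bzU: "ball z t \<subseteq> U" using assms(1,2) by blast
  have m1: "u ` ball z t \<in> lmeasurable" using MBu(1)[OF bzU open_sets_lebesgue] by simp
  have Om: "Ov \<in> lmeasurable"
    using assms(4,6) bounded_ball bounded_subset open_sets_lebesgue bounded_set_imp_lmeasurable by metis
  have Bm: "ball (u z) t \<in> lmeasurable" by simp
  have Opos: "measure lebesgue Ov > 0"
    using open_not_negligible[OF assms(4,5)] negligible_iff_measure0[OF Om] measure_nonneg[of lebesgue Ov] by linarith
  have "measure lebesgue (u ` ball z t) \<le> measure lebesgue (ball (u z) t - Ov)"
    by (rule measure_mono_fmeasurable[OF sub]) (use m1 Bm Om in \<open>auto intro: fmeasurable_Diff\<close>)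
  also have "\<dots> = measure lebesgue (ball (u z) t) - measure lebesgue Ov"
    by (rule measurable_measure_Diff[OF Bm fmeasurableD[OF Om] assms(6)])
  also have "measure lebesgue (ball (u z) t) = measure lebesgue (ball z t)" by (rule measure_ball_eq)
  also have "measure lebesgue (ball z t) = measure lebesgue (u ` ball z t)"
    using BALLm[OF open_ball bzU] by simp
  finally show False using Opos by linarith
qed

lemma ISO:
  assumes "ball c R \<subseteq> U" "x \<in> ball c (R/2)" "y \<in> ball c (R/2)"
  shows "norm (u y - u x) = norm (y - x)"
proof (rule ccontr)
  assume ne: "norm (u y - u x) \<noteq> norm (y - x)"
  have h1: "dist c x < R/2" "dist c y < R/2" using assms(2,3) by auto
  have h2: "0 \<le> dist c x" "0 \<le> dist c y" by simp_all
  have "dist c x < R" "dist c y < R" using h1 h2 by linarith+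
  then have xR: "x \<in> ball c R" and yR: "y \<in> ball c R" by auto
  have le: "norm (u y - u x) \<le> norm (y - x)" by (rule LIP1[OF assms(1) xR yR])
  then have lt: "norm (u y - u x) < norm (y - x)" using ne by simp
  define t where "t = norm (y - x) / 2"
  have "norm (y - x) > 0" using lt norm_ge_zero[of "u y - u x"] by linarith
  then have t: "t > 0" by (simp add: t_def)
  have dxy: "norm (y - x) < R"
  proof -
    have "norm (y - x) \<le> dist c x + dist c y" by (metis dist_norm dist_commute dist_triangle)
    then show ?thesis using assms(2,3) by simp
  qed
  have bx: "ball x t \<subseteq> ball c R"
  proof
    fix w assume "w \<in> ball x t"
    then have "dist c w \<le> dist c x + dist x w" "dist x w < t" by (simp_all add: dist_triangle)
    then show "w \<in> ball c R" using assms(2) dxy by (simp add: t_def)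
  qed
  have byy: "ball y t \<subseteq> ball c R"
  proof
    fix w assume "w \<in> ball y t"
    then have "dist c w \<le> dist c y + dist y w" "dist y w < t" by (simp_all add: dist_triangle)
    then show "w \<in> ball c R" using assms(3) dxy by (simp add: t_def)
  qed
  have disj: "ball x t \<inter> ball y t = {}"
  proof (rule ccontr)
    assume "ball x t \<inter> ball y t \<noteq> {}"
    then obtain w where "dist x w < t" "dist y w < t" by auto
    then have "dist x y < 2 * t" by (metis dist_commute dist_triangle_lt add_strict_mono mult_2)
    then show False by (simp add: t_def dist_norm norm_minus_commute)
  qed
  define W0 where "W0 = ball (u x) t \<inter> ball (u y) t"
  have oW0: "open W0" by (simp add: W0_def open_Int)
  have neW0: "W0 \<noteq> {}"
  proof -
    have dd: "dist (u x) (u y) = norm (u y - u x)" by (simp add: dist_norm norm_minus_commute)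
    have "dist (u x) (midpoint (u x) (u y)) = norm (u y - u x) / 2"
      using dist_midpoint(3)[of "u x" "u y"] dist_midpoint(1)[of "u x" "u y"] dd by (metis dist_midpoint(1))
    moreover have "dist (u y) (midpoint (u x) (u y)) = norm (u y - u x) / 2"
      using dist_midpoint[of "u x" "u y"] dd by (metis dist_commute)
    ultimately have "midpoint (u x) (u y) \<in> W0" using lt by (simp add: W0_def t_def)
    then show ?thesis by blast
  qed
  have "W0 \<inter> u ` ball x t \<noteq> {}"
    by (rule DENS[OF assms(1) bx t oW0 neW0]) (simp add: W0_def)
  moreover have "open (W0 \<inter> u ` ball x t)"
    using om bx assms(1) oW0 by (metis open_Int open_ball subset_trans)
  ultimately have "(W0 \<inter> u ` ball x t) \<inter> u ` ball y t \<noteq> {}"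
    by (intro DENS[OF assms(1) byy t]) (auto simp: W0_def)
  then obtain a b where ab: "a \<in> ball x t" "b \<in> ball y t" "u a = u b" by blast
  have "a \<noteq> b" using ab disj by auto
  moreover have "a \<in> U" "b \<in> U" using ab bx byy assms(1) by auto
  ultimately show False using inj ab(3) by (auto simp: inj_on_def)
qed

end

lemma AFFUNIQ:
  fixes M M' :: "real^'n::finite^'n" and b b' :: "real^'n"
  assumes r: "r > 0" and eq: "\<And>x. x \<in> ball c r \<Longrightarrow> M *v x + b = M' *v x + b'"
  shows "M *v y + b = M' *v y + b'"
proof -
  define s where "s = r / (2 * (norm (y - c) + 1))"
  have pos: "2 * (norm (y - c) + 1) > 0" by (intro mult_pos_pos) (simp_all add: add_nonneg_pos)
  then have s: "s > 0" using r by (simp add: s_def del: distrib_left_numeral)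
  have "s * norm (y - c) < r"
  proof -
    have "s * norm (y - c) \<le> s * (norm (y - c) + 1)" using s by simp
    also have "\<dots> = r / 2" unfolding s_def using pos by (simp add: field_simps)
    finally show ?thesis using r by simp
  qed
  then have x1: "c + s *\<^sub>R (y - c) \<in> ball c r" using s by (simp add: dist_norm)
  have e1: "M *v c + b = M' *v c + b'" using eq[of c] r by simp
  have e2: "M *v (c + s *\<^sub>R (y - c)) + b = M' *v (c + s *\<^sub>R (y - c)) + b'" using eq[OF x1] .
  define X where "X = M *v (y - c)"
  define X' where "X' = M' *v (y - c)"
  have e2': "M *v c + s *\<^sub>R X + b = M' *v c + s *\<^sub>R X' + b'"
    using e2 unfolding X_def X'_def by (simp add: matrix_vector_right_distrib matrix_vector_mult_scaleR algebra_simps)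
  have "s *\<^sub>R X = (M *v c + s *\<^sub>R X + b) - (M *v c + b)" by simp
  also have "\<dots> = (M' *v c + s *\<^sub>R X' + b') - (M' *v c + b')" using e1 e2' by simp
  also have "\<dots> = s *\<^sub>R X'" by simp
  finally have "s *\<^sub>R (M *v (y - c)) = s *\<^sub>R (M' *v (y - c))" by (simp add: X_def X'_def)
  then have e3: "M *v (y - c) = M' *v (y - c)" using s by simp
  have "M *v y + b = M *v (y - c) + (M *v c + b)" by (simp add: matrix_vector_mult_diff_distrib)
  also have "\<dots> = M' *v (y - c) + (M' *v c + b')" using e1 e3 by simp
  also have "\<dots> = M' *v y + b'" by (simp add: matrix_vector_mult_diff_distrib)
  finally show ?thesis .
qed

context rig begin

lemma AFF_LOCAL:
  assumes "c \<in> U"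
  shows "\<exists>r>0. ball c r \<subseteq> U \<and> (\<exists>M b. \<forall>x\<in>ball c r. u x = M *v x + b)"
proof -
  obtain R where R: "R > 0" "ball c R \<subseteq> U" using oU assms open_contains_ball by blast
  define r where "r = R / 2"
  have r: "r > 0" using R by (simp add: r_def)
  have "\<not> ball c r \<subseteq> N"
  proof
    assume "ball c r \<subseteq> N"
    then have "negligible (ball c r)" using negN negligible_subset by blast
    then show False using open_not_negligible[of "ball c r"] r by simp
  qed
  then obtain x0 where x0: "x0 \<in> ball c r" "x0 \<notin> N" by blast
  have x0U: "x0 \<in> U" using x0(1) R by (auto simp: r_def)
  obtain D where D: "(u has_derivative D) (at x0)" "orthogonal_matrix (matrix D)"
    using der[of x0] x0U x0(2) by blast
  have lD: "linear D" using D(1) has_derivative_linear by blast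
  have iso: "norm (u y - u x) = norm (y - x)" if "x \<in> ball c r" "y \<in> ball c r" for x y
    using ISO[OF R(2)] that by (simp add: r_def)
  have key: "u x = u x0 + D (x - x0)" if x: "x \<in> ball c r" for x
  proof (cases "x = x0")
    case True then show ?thesis using lD by (simp add: linear_0)
  next
    case False
    define w where "w = x - x0"
    define a where "a = u x0"
    define b where "b = u x"
    have nw: "norm w > 0" using False by (simp add: w_def)
    have zin: "x0 + t *\<^sub>R w \<in> ball c r" if "0 \<le> t" "t \<le> 1" for t
    proof -
      have "(1 - t) *\<^sub>R x0 + t *\<^sub>R x \<in> ball c r"
        using convex_ball[of c r, unfolded convex_alt] x0(1) x that by blast
      moreover have "(1 - t) *\<^sub>R x0 + t *\<^sub>R x = x0 + t *\<^sub>R w" by (simp add: w_def algebra_simps)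
      ultimately show ?thesis by simp
    qed
    have nab: "norm (a - b) = norm w" using iso[OF x0(1) x] by (simp add: a_def b_def w_def norm_minus_commute)
    have seg: "u (x0 + t *\<^sub>R w) = a + t *\<^sub>R (b - a)" if t: "0 \<le> t" "t \<le> 1" for t
    proof -
      define z where "z = x0 + t *\<^sub>R w"
      have zb: "z \<in> ball c r" using zin[OF t] by (simp add: z_def)
      have d1: "dist a (u z) = t * norm w"
        using iso[OF x0(1) zb] t by (simp add: a_def z_def dist_norm norm_minus_commute)
      have d2: "dist (u z) b = (1 - t) * norm w"
      proof -
        have "dist (u z) b = norm (x - z)" using iso[OF zb x] by (simp add: b_def dist_norm norm_minus_commute)
        also have "x - z = (1 - t) *\<^sub>R w" by (simp add: z_def w_def algebra_simps)
        finally show ?thesis using t by simp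
      qed
      have "dist a b = dist a (u z) + dist (u z) b" using d1 d2 nab by (simp add: dist_norm algebra_simps)
      then have "between (a, b) (u z)" by (simp add: between)
      then obtain s where s: "0 \<le> s" "s \<le> 1" "u z = (1 - s) *\<^sub>R a + s *\<^sub>R b" by (rule betweenE)
      have "dist a (u z) = s * norm w"
      proof -
        have "a - u z = s *\<^sub>R (a - b)" using s(3) by (simp add: algebra_simps)
        then show ?thesis using s(1) nab by (simp add: dist_norm)
      qed
      then have "s = t" using d1 nw by simp
      then show ?thesis using s(3) by (simp add: z_def algebra_simps)
    qed
    have dphi: "((\<lambda>t. x0 + t *\<^sub>R w) has_vector_derivative w) (at 0 within {0..1})"
      by (auto intro!: derivative_eq_intros)
    have du: "(u has_derivative D) (at ((\<lambda>t. x0 + t *\<^sub>R w) 0) within (\<lambda>t. x0 + t *\<^sub>R w) ` {0..1})"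
      using has_derivative_at_withinI[OF D(1)] by simp
    have d1: "(u \<circ> (\<lambda>t. x0 + t *\<^sub>R w) has_vector_derivative D w) (at 0 within {0..1})"
      by (rule vector_derivative_diff_chain_within[OF dphi du])
    have d2: "((\<lambda>t. a + t *\<^sub>R (b - a)) has_vector_derivative D w) (at 0 within {0..1})"
      by (rule has_vector_derivative_transform_within[OF d1, of 1]) (auto simp: seg)
    have d3: "((\<lambda>t. a + t *\<^sub>R (b - a)) has_vector_derivative (b - a)) (at 0 within {0..1})"
      by (auto intro!: derivative_eq_intros)
    have "D w = b - a"
      using vector_derivative_unique_within_closed_interval[of 0 1 0 "\<lambda>t. a + t *\<^sub>R (b - a)"] d2 d3 by simp
    then show ?thesis by (simp add: a_def b_def w_def)
  qed
  show ?thesis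
  proof (intro exI conjI)
    show "r > 0" by (rule r)
    show "ball c r \<subseteq> U" using R by (auto simp: r_def)
    show "\<forall>x\<in>ball c r. u x = matrix D *v x + (u x0 - matrix D *v x0)"
      using key lD by (simp add: matrix_works linear_diff)
  qed
qed

lemma GLOBAL: "\<exists>M b. \<forall>x\<in>U. u x = M *v x + b"
proof (cases "U = {}")
  case True then show ?thesis by simp
next
  case False
  then obtain c0 where c0: "c0 \<in> U" by blast
  obtain r0 M0 b0 where r0: "r0 > 0" "ball c0 r0 \<subseteq> U" "\<forall>x\<in>ball c0 r0. u x = M0 *v x + b0"
    using AFF_LOCAL[OF c0] by blast
  define A where "A = {c. \<exists>r>0. ball c r \<subseteq> U \<and> (\<forall>x\<in>ball c r. u x = M0 *v x + b0)}"
  define B where "B = {c. \<exists>r>0. ball c r \<subseteq> U \<and> (\<exists>M b. (\<forall>x\<in>ball c r. u x = M *v x + b) \<and> \<not> (\<forall>x. M *v x + b = M0 *v x + b0))}"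
  have sub_ball: "ball c' (r - dist c c') \<subseteq> ball c r" for c c' :: "real^'n::_" and r
    by (auto simp: dist_commute) (metis dist_triangle_lt add.commute dist_commute less_diff_eq)
  have oA: "open A"
  proof (rule openI)
    fix c assume "c \<in> A"
    then obtain r where r: "r > 0" "ball c r \<subseteq> U" "\<forall>x\<in>ball c r. u x = M0 *v x + b0" by (auto simp: A_def)
    have "ball c r \<subseteq> A"
    proof
      fix c' assume c': "c' \<in> ball c r"
      then have "r - dist c c' > 0" by simp
      then show "c' \<in> A" unfolding A_def using sub_ball[where c=c and c'=c' and r=r] r by blast
    qed
    then show "\<exists>e>0. ball c e \<subseteq> A" using r(1) by blast
  qed
  have oB: "open B"
  proof (rule openI)
    fix c assume "c \<in> B"
    then obtain r M b where r: "r > 0" "ball c r \<subseteq> U" "\<forall>x\<in>ball c r. u x = M *v x + b" "\<not> (\<forall>x. M *v x + b = M0 *v x + b0)"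
      by (auto simp: B_def)
    have "ball c r \<subseteq> B"
    proof
      fix c' assume c': "c' \<in> ball c r"
      then have "r - dist c c' > 0" by simp
      then show "c' \<in> B" unfolding B_def using sub_ball[where c=c and c'=c' and r=r] r by blast
    qed
    then show "\<exists>e>0. ball c e \<subseteq> B" using r(1) by blast
  qed
  have cov: "U \<subseteq> A \<union> B"
  proof
    fix c assume c: "c \<in> U"
    obtain r M b where r: "r > 0" "ball c r \<subseteq> U" "\<forall>x\<in>ball c r. u x = M *v x + b"
      using AFF_LOCAL[OF c] by blast
    show "c \<in> A \<union> B"
    proof (cases "\<forall>x. M *v x + b = M0 *v x + b0")
      case True then have "c \<in> A" unfolding A_def using r by auto
      then show ?thesis by simp
    next
      case False then have "c \<in> B" unfolding B_def using r by blast
      then show ?thesis by simp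
    qed
  qed
  have dis: "A \<inter> B \<inter> U = {}"
  proof (rule ccontr)
    assume "A \<inter> B \<inter> U \<noteq> {}"
    then obtain c where "c \<in> A" "c \<in> B" by blast
    then obtain r1 r2 M b where r1: "r1 > 0" "\<forall>x\<in>ball c r1. u x = M0 *v x + b0"
      and r2: "r2 > 0" "\<forall>x\<in>ball c r2. u x = M *v x + b" "\<not> (\<forall>x. M *v x + b = M0 *v x + b0)"
      unfolding A_def B_def by blast
    have "M *v y + b = M0 *v y + b0" for y
    proof (rule AFFUNIQ[of "min r1 r2" c])
      show "0 < min r1 r2" using r1 r2 by simp
      fix x assume "x \<in> ball c (min r1 r2)"
      then have "x \<in> ball c r1" "x \<in> ball c r2" by auto
      then show "M *v x + b = M0 *v x + b0" using r1(2) r2(2) by metis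
    qed
    then show False using r2(3) by blast
  qed
  have "A \<inter> U = {} \<or> B \<inter> U = {}" by (rule connectedD[OF cU oA oB dis cov])
  moreover have "c0 \<in> A" unfolding A_def using r0 by blast
  ultimately have "B \<inter> U = {}" using c0 by blast
  then have "U \<subseteq> A" using cov by blast
  then have "\<forall>x\<in>U. u x = M0 *v x + b0"
    by (auto simp: A_def)
  then show ?thesis by blast
qed

lemma affine_closure: "\<exists>M b. \<forall>x\<in>closure U. u x = M *v x + b"
proof -
  obtain M b where Mb: "\<forall>x\<in>U. u x = M *v x + b" using GLOBAL by blast
  have "u x = M *v x + b" if "x \<in> closure U" for x
  proof -
    have c: "continuous_on (closure U) (\<lambda>x. u x - (M *v x + b))"
      by (intro continuous_intros cont)
    have "u x - (M *v x + b) = 0"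
      by (rule continuous_constant_on_closure[OF c _ that]) (use Mb in simp)
    then show ?thesis by simp
  qed
  then show ?thesis by blast
qed

end

theorem core_wo:
  fixes U :: "(real^'n::{finite,wellorder}) set" and u :: "real^'n::_ \<Rightarrow> real^'n::_"
  assumes "open U" and "connected U" and "bounded U"
    and "continuous_on (closure U) u"
    and "locally_lipschitz_on (closure U) u"
    and "\<forall>V. open V \<and> V \<subseteq> U \<longrightarrow> open (u ` V)"
    and "emeasure lebesgue U = emeasure lebesgue (u ` U)"
    and "AE x in lebesgue. x \<in> U \<longrightarrow>
           (\<exists>D. (u has_derivative D) (at x) \<and> orthogonal_matrix (matrix D))"
  shows "\<exists>(M::(real^'n::_)^'n::_) b. \<forall>x\<in>closure U. u x = M *v x + b"
proof -
  obtain N where N: "{x \<in> space lebesgue. \<not> (x \<in> U \<longrightarrow> (\<exists>D. (u has_derivative D) (at x) \<and> orthogonal_matrix (matrix D)))} \<subseteq> N"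
      "emeasure lebesgue N = 0" "N \<in> sets lebesgue"
    using AE_E[OF assms(8)] by blast
  have negN: "negligible N" using N(2,3) by (simp add: negligible_iff_null_sets null_sets_def)
  interpret rig U u N
  proof
    fix x assume "x \<in> U - N"
    then show "\<exists>D. (u has_derivative D) (at x) \<and> orthogonal_matrix (matrix D)" using N(1) by auto
  qed (use assms negN in auto)
  show ?thesis using affine_closure .
qed

lemma bij_Abs_wo: "bij Abs_wo"
  by (metis Abs_wo_inverse Rep_wo_inverse UNIV_I bij_betw_byWitness subset_UNIV)
lemma bij_Rep_wo: "bij Rep_wo"
  by (metis Abs_wo_inverse Rep_wo_inverse UNIV_I bij_betw_byWitness subset_UNIV)

theorem theorem3p8:
  fixes U :: "(real^'n) set" and u :: "real^'n \<Rightarrow> real^'n"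
  assumes "open U" and "connected U" and "bounded U"
    and "continuous_on (closure U) u"
    and "locally_lipschitz_on (closure U) u"
    and "\<forall>V. open V \<and> V \<subseteq> U \<longrightarrow> open (u ` V)"
    and "emeasure lebesgue U = emeasure lebesgue (u ` U)"
    and "u ` frontier U \<subseteq> frontier (u ` U)"
    and "AE x in lebesgue. x \<in> U \<longrightarrow>
           (\<exists>D. (u has_derivative D) (at x) \<and> orthogonal_matrix (matrix D))"
  shows "\<exists>(M::real^'n^'n) b. \<forall>x\<in>closure U. u x = M *v x + b"
proof -
  define \<Phi> :: "real^'n wo \<Rightarrow> real^'n" where "\<Phi> = reidx Abs_wo"
  define \<Psi> :: "real^'n \<Rightarrow> real^'n wo" where "\<Psi> = reidx Rep_wo"
  have \<Phi>\<Psi>: "\<Phi> (\<Psi> x) = x" for x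
    by (simp add: \<Phi>_def \<Psi>_def reidx_def vec_eq_iff Abs_wo_inverse)
  have \<Psi>\<Phi>: "\<Psi> (\<Phi> y) = y" for y
    by (simp add: \<Phi>_def \<Psi>_def reidx_def vec_eq_iff Rep_wo_inverse)
  have l\<Phi>: "linear \<Phi>" and l\<Psi>: "linear \<Psi>" by (simp_all add: \<Phi>_def \<Psi>_def linear_reidx)
  have n\<Phi>: "norm (\<Phi> y) = norm y" for y by (simp add: \<Phi>_def norm_reidx bij_Abs_wo)
  have n\<Psi>: "norm (\<Psi> x) = norm x" for x by (simp add: \<Psi>_def norm_reidx bij_Rep_wo)
  have c\<Phi>: "continuous_on UNIV \<Phi>" and c\<Psi>: "continuous_on UNIV \<Psi>"
    by (simp_all add: \<Phi>_def \<Psi>_def continuous_reidx)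
  have img: "\<Psi> ` S = \<Phi> -` S" for S
  proof
    show "\<Psi> ` S \<subseteq> \<Phi> -` S" using \<Phi>\<Psi> by auto
    show "\<Phi> -` S \<subseteq> \<Psi> ` S"
    proof
      fix y assume "y \<in> \<Phi> -` S"
      then have "\<Phi> y \<in> S" by simp
      moreover have "y = \<Psi> (\<Phi> y)" by (simp add: \<Psi>\<Phi>)
      ultimately show "y \<in> \<Psi> ` S" by blast
    qed
  qed
  have img2: "\<Phi> ` S = \<Psi> -` S" for S
  proof
    show "\<Phi> ` S \<subseteq> \<Psi> -` S" using \<Psi>\<Phi> by auto
    show "\<Psi> -` S \<subseteq> \<Phi> ` S"
    proof
      fix y assume "y \<in> \<Psi> -` S"
      then have "\<Psi> y \<in> S" by simp
      moreover have "y = \<Phi> (\<Psi> y)" by (simp add: \<Phi>\<Psi>)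
      ultimately show "y \<in> \<Phi> ` S" by blast
    qed
  qed
  have open\<Psi>: "open (\<Psi> ` S)" if "open S" for S
    unfolding img using open_vimage[OF that c\<Phi>] by simp
  have open\<Phi>: "open (\<Phi> ` S)" if "open S" for S
    unfolding img2 using open_vimage[OF that c\<Psi>] by simp
  have inj\<Psi>: "inj \<Psi>" by (metis \<Phi>\<Psi> injI)
  define U' where "U' = \<Psi> ` U"
  define u' where "u' = \<Psi> \<circ> u \<circ> \<Phi>"
  have clU': "closure U' = \<Psi> ` closure U"
    unfolding U'_def using closure_injective_linear_image[OF l\<Psi> inj\<Psi>] by simp
  have h1: "open U'" unfolding U'_def by (rule open\<Psi>[OF assms(1)])
  have h2: "connected U'" unfolding U'_def by (rule connected_linear_image[OF l\<Psi> assms(2)])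
  have h3: "bounded U'" unfolding U'_def
    by (rule bounded_linear_image[OF assms(3)]) (simp add: l\<Psi> linear_linear)
  have \<Phi>clU: "\<Phi> ` closure U' = closure U" unfolding clU' image_image \<Phi>\<Psi> by simp
  have h4: "continuous_on (closure U') u'"
  proof -
    have a: "continuous_on (closure U') \<Phi>" using c\<Phi> continuous_on_subset by blast
    have b: "continuous_on (\<Phi> ` closure U') u" unfolding \<Phi>clU by (rule assms(4))
    have "continuous_on (closure U') (u \<circ> \<Phi>)" by (rule continuous_on_compose[OF a b])
    moreover have "continuous_on ((u \<circ> \<Phi>) ` closure U') \<Psi>" using c\<Psi> continuous_on_subset by blast
    ultimately have "continuous_on (closure U') (\<Psi> \<circ> (u \<circ> \<Phi>))" by (rule continuous_on_compose)
    then show ?thesis by (simp add: u'_def comp_assoc)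
  qed
  have h5: "locally_lipschitz_on (closure U') u'"
    unfolding locally_lipschitz_on_def
  proof
    fix x assume x: "x \<in> closure U'"
    then have "\<Phi> x \<in> closure U" using \<Phi>clU by blast
    then obtain e L where e: "e > 0" "L-lipschitz_on (ball (\<Phi> x) e \<inter> closure U) u"
      using assms(5) unfolding locally_lipschitz_on_def by blast
    have "L-lipschitz_on (ball x e \<inter> closure U') u'"
    proof (rule lipschitz_onI)
      fix y z assume y: "y \<in> ball x e \<inter> closure U'" and z: "z \<in> ball x e \<inter> closure U'"
      have dd: "dist (\<Phi> a) (\<Phi> b) = dist a b" for a b
        by (simp add: dist_norm linear_diff[OF l\<Phi>, symmetric] n\<Phi>)
      have "\<Phi> y \<in> ball (\<Phi> x) e \<inter> closure U" "\<Phi> z \<in> ball (\<Phi> x) e \<inter> closure U"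
        using y z \<Phi>clU dd by auto
      then have "dist (u (\<Phi> y)) (u (\<Phi> z)) \<le> L * dist (\<Phi> y) (\<Phi> z)"
        using lipschitz_onD[OF e(2)] by blast
      moreover have "dist (u' y) (u' z) = dist (u (\<Phi> y)) (u (\<Phi> z))"
        by (simp add: u'_def dist_norm linear_diff[OF l\<Psi>, symmetric] n\<Psi>)
      ultimately show "dist (u' y) (u' z) \<le> L * dist y z" using dd by simp
    next
      show "0 \<le> L" using e(2) lipschitz_on_nonneg by blast
    qed
    then show "\<exists>e>0. \<exists>L. L-lipschitz_on (ball x e \<inter> closure U') u'" using e(1) by blast
  qed
  have h6: "\<forall>V. open V \<and> V \<subseteq> U' \<longrightarrow> open (u' ` V)"
  proof (intro allI impI)
    fix V assume V: "open V \<and> V \<subseteq> U'"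
    have "\<Phi> ` V \<subseteq> U" using V \<Phi>\<Psi> by (auto simp: U'_def)
    then have "open (u ` \<Phi> ` V)" using assms(6) open\<Phi> V by blast
    then have "open (\<Psi> ` u ` \<Phi> ` V)" by (rule open\<Psi>)
    then show "open (u' ` V)" by (simp add: u'_def image_comp)
  qed
  have uU: "u' ` U' = \<Psi> ` (u ` U)" by (simp add: u'_def U'_def image_comp \<Phi>\<Psi> o_def)
  have mU: "U \<in> sets lebesgue" using assms(1) open_sets_lebesgue by blast
  have muU: "u ` U \<in> sets lebesgue" using assms(6,1) open_sets_lebesgue by blast
  have h7: "emeasure lebesgue U' = emeasure lebesgue (u' ` U')"
  proof -
    have "emeasure lebesgue U' = emeasure lebesgue U"
      unfolding U'_def img \<Phi>_def by (rule lebesgue_reidx_vimage(2)[OF bij_Abs_wo mU])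
    also have "\<dots> = emeasure lebesgue (u ` U)" by (rule assms(7))
    also have "\<dots> = emeasure lebesgue (u' ` U')"
      unfolding uU img \<Phi>_def by (rule lebesgue_reidx_vimage(2)[OF bij_Abs_wo muU, symmetric])
    finally show ?thesis .
  qed
  obtain N where N: "{x \<in> space lebesgue. \<not> (x \<in> U \<longrightarrow> (\<exists>D. (u has_derivative D) (at x) \<and> orthogonal_matrix (matrix D)))} \<subseteq> N"
      "emeasure lebesgue N = 0" "N \<in> sets lebesgue"
    using AE_E[OF assms(9)] by blast
  have h8: "AE y in lebesgue. y \<in> U' \<longrightarrow> (\<exists>D. (u' has_derivative D) (at y) \<and> orthogonal_matrix (matrix D))"
  proof (rule AE_I')
    show "\<Phi> -` N \<in> null_sets lebesgue"
      using lebesgue_reidx_vimage[OF bij_Abs_wo N(3)] N(2) by (simp add: \<Phi>_def null_sets_def)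
    show "{y \<in> space lebesgue. \<not> (y \<in> U' \<longrightarrow> (\<exists>D. (u' has_derivative D) (at y) \<and> orthogonal_matrix (matrix D)))} \<subseteq> \<Phi> -` N"
    proof (rule subsetI, rule ccontr)
      fix y assume y: "y \<in> {y \<in> space lebesgue. \<not> (y \<in> U' \<longrightarrow> (\<exists>D. (u' has_derivative D) (at y) \<and> orthogonal_matrix (matrix D)))}"
        and nN: "y \<notin> \<Phi> -` N"
      have yU: "y \<in> U'" using y by simp
      have "\<Phi> y \<in> U" using yU \<Phi>\<Psi> by (auto simp: U'_def)
      then obtain D where D: "(u has_derivative D) (at (\<Phi> y))" "orthogonal_matrix (matrix D)"
        using N(1) nN by auto
      have lD: "linear D" using D(1) has_derivative_linear by blast
      have oD: "orthogonal_transformation D" using D(2) lD by (simp add: orthogonal_transformation_matrix)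
      have "((\<Psi> \<circ> (u \<circ> \<Phi>)) has_derivative (\<Psi> \<circ> (D \<circ> \<Phi>))) (at y)"
        by (rule diff_chain_at[OF diff_chain_at[OF linear_imp_has_derivative[OF l\<Phi>] D(1)] linear_imp_has_derivative[OF l\<Psi>]])
      then have d: "(u' has_derivative (\<Psi> \<circ> (D \<circ> \<Phi>))) (at y)" by (simp add: u'_def comp_assoc)
      have "orthogonal_transformation (\<Psi> \<circ> (D \<circ> \<Phi>))"
        unfolding orthogonal_transformation
      proof
        show "linear (\<Psi> \<circ> (D \<circ> \<Phi>))" using l\<Psi> lD l\<Phi> by (simp add: linear_compose)
        show "\<forall>v. norm ((\<Psi> \<circ> (D \<circ> \<Phi>)) v) = norm v"
          using orthogonal_transformation_norm[OF oD] n\<Phi> n\<Psi> by simp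
      qed
      then have "orthogonal_matrix (matrix (\<Psi> \<circ> (D \<circ> \<Phi>)))" by (simp add: orthogonal_transformation_matrix)
      then show False using y d by blast
    qed
  qed
  obtain M' b' where Mb: "\<forall>y\<in>closure U'. u' y = M' *v y + b'"
    using core_wo[OF h1 h2 h3 h4 h5 h6 h7 h8] by blast
  define L where "L = \<Phi> \<circ> (\<lambda>y. M' *v y) \<circ> \<Psi>"
  have lL: "linear L" unfolding L_def
    by (intro linear_compose l\<Phi> l\<Psi>) (simp add: matrix_vector_mul_linear)
  have "u x = matrix L *v x + \<Phi> b'" if x: "x \<in> closure U" for x
  proof -
    have "\<Psi> x \<in> closure U'" using x clU' by blast
    then have "u' (\<Psi> x) = M' *v \<Psi> x + b'" using Mb by blast
    then have "\<Psi> (u x) = M' *v \<Psi> x + b'" by (simp add: u'_def \<Phi>\<Psi>)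
    then have "u x = \<Phi> (M' *v \<Psi> x + b')" by (metis \<Phi>\<Psi>)
    also have "\<dots> = L x + \<Phi> b'" by (simp add: L_def linear_add[OF l\<Phi>])
    also have "L x = matrix L *v x" by (simp add: matrix_works lL)
    finally show ?thesis .
  qed
  then show ?thesis by blast
qed

end
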